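(* In the setting described in the context, the following hold. (i) $\mathcal P_{\mathcal C}+\mathcal P_{\mathcal N}=M(M^TM)^{-1}M^T$, the orthogonal projection onto $\mathrm{col}(M)$. (ii) $$\mathcal P_{\mathcal C}=\sum_{i=r+1}^{r+s}\frac{1}{1-\sigma_i^2}\tilde Z_i\tilde Z_i^T-\sum_{i=r+1}^{r+s}\frac{\sigma_i}{1-\sigma_i^2}\tilde Z_i\tilde W_i^T+\sum_{i=r+s+1}^p\tilde Z_i\tilde Z_i^T,$$ $$\mathcal P_{\mathcal N}=\sum_{i=r+1}^{r+s}\frac{1}{1-\sigma_i^2}\tilde W_i\tilde W_i^T-\sum_{i=r+1}^{r+s}\frac{\sigma_i}{1-\sigma_i^2}\tilde W_i\tilde Z_i^T+\sum_{i=r+s+1}^K\tilde W_i\tilde W_i^T.$$ (iii) For any $x\in\mathrm{col}(\tilde Z_{(r+1):p})$ and $y\in\mathrm{col}(\tilde W_{(r+1):K})$: $\mathcal P_{\mathcal C}(x+y)=x$ and $\mathcal P_{\mathcal N}(x+y)=y$. (iv) For any $x\in\mathbb{R}^n$: $\|\mathcal P_{\mathcal C}^Tx\|\ge\|\tilde Z_{(r+1):p}^Tx\|$.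
   Context: Let $Z\in\mathbb{R}^{n\times p}$ and $W\in\mathbb{R}^{n\times K}$ have orthonormal columns (spanning $\mathrm{col}(X)$ and $S_K(P)$ respectively). Let $Z^TW=U\Sigma V^T$ be an SVD with $U\in\mathbb{R}^{p\times p}$, $V\in\mathbb{R}^{K\times K}$ orthogonal and singular values on the diagonal of $\Sigma$: $\sigma_1=\dots=\sigma_r=1>\sigma_{r+1}\ge\dots\ge\sigma_{r+s}>0=\sigma_{r+s+1}=\cdots$. Put $\tilde Z=ZU$, $\tilde W=WV$; $M_i$ denotes column $i$ and $M_{i:j}$ columns $i$ through $j$ of a matrix. Let $M=(\tilde Z_{(r+1):p},\tilde W_{(r+1):K})$ and $\mathcal P_{\mathcal C}=(\tilde Z_{(r+1):p},0_{n\times(K-r)})(M^TM)^{-1}M^T$, $\mathcal P_{\mathcal N}=(0_{n\times(p-r)},\tilde W_{(r+1):K})(M^TM)^{-1}M^T$. $\|\cdot\|$ is the Euclidean norm. *)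

theory Defs
  imports Jordan_Normal_Form.Gauss_Jordan_Elimination
begin

(* columns a, ..., b-1 (0-based) of A; paper's M_{(a+1):b} *)
definition col_range :: "'a mat \<Rightarrow> nat \<Rightarrow> nat \<Rightarrow> 'a mat" where
  "col_range A a b = mat (dim_row A) (b - a) (\<lambda>(i,j). A $$ (i, a + j))"

definition hcat :: "'a::zero mat \<Rightarrow> 'a mat \<Rightarrow> 'a mat" where
  "hcat A B = four_block_mat A B (0\<^sub>m 0 (dim_col A)) (0\<^sub>m 0 (dim_col B))"

definition outer :: "'a::times vec \<Rightarrow> 'a vec \<Rightarrow> 'a mat" where
  "outer v w = mat (dim_vec v) (dim_vec w) (\<lambda>(i,j). v $ i * w $ j)"

definition sum_mats :: "nat \<Rightarrow> nat \<Rightarrow> (nat \<Rightarrow> 'a::monoid_add mat) \<Rightarrow> nat \<Rightarrow> nat \<Rightarrow> 'a mat" where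
  "sum_mats nr nc f a b = foldr (\<lambda>i A. f i + A) [a..<b] (0\<^sub>m nr nc)"

definition minv :: "'a::field mat \<Rightarrow> 'a mat" where
  "minv A = the (mat_inverse A)"

definition vnorm :: "real vec \<Rightarrow> real" where
  "vnorm v = sqrt (v \<bullet> v)"

end

theory Submission
  imports Defs Jordan_Normal_Form.Determinant
begin

lemma col_range_carrier[simp]: "col_range A a b \<in> carrier_mat (dim_row A) (b - a)"
  by (simp add: col_range_def)
lemma col_range_dims[simp]: "dim_row (col_range A a b) = dim_row A" "dim_col (col_range A a b) = b - a"
  by (auto simp add: col_range_def)
lemma col_range_index[simp]: "i < dim_row A \<Longrightarrow> j < b - a \<Longrightarrow> col_range A a b $$ (i,j) = A $$ (i, a+j)"
  by (simp add: col_range_def)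

lemma hcat_carrier: "A \<in> carrier_mat n a \<Longrightarrow> B \<in> carrier_mat n b \<Longrightarrow> hcat A B \<in> carrier_mat n (a+b)"
  unfolding hcat_def using four_block_carrier_mat[of A n a "0\<^sub>m 0 b" 0 b] by auto

lemma hcat_transpose_mult:
  assumes "A \<in> carrier_mat n a" "B \<in> carrier_mat n b" "C \<in> carrier_mat n c" "D \<in> carrier_mat n d"
  shows "transpose_mat (hcat A B) * hcat C D = four_block_mat (transpose_mat A * C) (transpose_mat A * D) (transpose_mat B * C) (transpose_mat B * D)"
  unfolding hcat_def using assms
  by (subst transpose_four_block_mat[of _ n a _ b _ 0], auto,
      subst mult_four_block_mat[of _ a n _ 0 _ b _ _ c _ d], auto)

lemma hcat_mult_four:
  assumes "X \<in> carrier_mat n a" "Y \<in> carrier_mat n b" "P \<in> carrier_mat a c" "Q \<in> carrier_mat a d"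
    "R \<in> carrier_mat b c" "T \<in> carrier_mat b d"
  shows "hcat X Y * four_block_mat P Q R T = hcat (X*P + Y*R) (X*Q + Y*T)"
  unfolding hcat_def using assms
  by (subst mult_four_block_mat[of _ n a _ b _ 0 _ _ c _ d], auto)

lemma hcat_mult_transpose:
  assumes "X \<in> carrier_mat n a" "Y \<in> carrier_mat n b" "A \<in> carrier_mat m a" "B \<in> carrier_mat m b"
  shows "hcat X Y * transpose_mat (hcat A B) = X * transpose_mat A + Y * transpose_mat B"
proof -
  have "hcat X Y * transpose_mat (hcat A B) = four_block_mat (X * transpose_mat A + Y * transpose_mat B) (X * 0\<^sub>m a 0 + Y * 0\<^sub>m b 0) (0\<^sub>m 0 a * transpose_mat A + 0\<^sub>m 0 b * transpose_mat B) (0\<^sub>m 0 a * 0\<^sub>m a 0 + 0\<^sub>m 0 b * 0\<^sub>m b 0)"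
    unfolding hcat_def using assms
    by (subst transpose_four_block_mat[of _ m a _ b _ 0], auto,
      subst mult_four_block_mat[of _ n a _ b _ 0 _ _ m _ 0], auto)
  also have "\<dots> = X * transpose_mat A + Y * transpose_mat B"
    using assms by (intro eq_matI, auto)
  finally show ?thesis .
qed

lemma hcat_mult_vec:
  assumes "A \<in> carrier_mat n a" "B \<in> carrier_mat n b" "c \<in> carrier_vec a" "d \<in> carrier_vec b"
  shows "hcat A B *\<^sub>v (c @\<^sub>v d) = A *\<^sub>v c + B *\<^sub>v d"
  unfolding hcat_def using assms
  by (subst four_block_mat_mult_vec[of _ n a _ b _ 0], auto intro!: eq_vecI)

lemma hcat_add:
  assumes "A \<in> carrier_mat n a" "B \<in> carrier_mat n b" "C \<in> carrier_mat n a" "D \<in> carrier_mat n b"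
  shows "hcat A B + hcat C D = hcat (A + C) (B + D)"
  unfolding hcat_def using assms
  by (subst add_four_block_mat[of _ n a _ b _ 0], auto)

definition dmat :: "nat \<Rightarrow> nat \<Rightarrow> (nat \<Rightarrow> real) \<Rightarrow> real mat" where
  "dmat a b f = mat a b (\<lambda>(i,j). if i = j then f i else 0)"

lemma dmat_carrier[simp]: "dmat a b f \<in> carrier_mat a b" by (simp add: dmat_def)
lemma dmat_dims[simp]: "dim_row (dmat a b f) = a" "dim_col (dmat a b f) = b" by (auto simp: dmat_def)
lemma dmat_index[simp]: "i < a \<Longrightarrow> j < b \<Longrightarrow> dmat a b f $$ (i,j) = (if i = j then f i else 0)"
  by (simp add: dmat_def)
lemma transpose_dmat: "transpose_mat (dmat a b f) = dmat b a f"
  by (rule eq_matI, auto)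

lemma mult_dmat: assumes "X \<in> carrier_mat n a"
  shows "X * dmat a b f = mat n b (\<lambda>(i,j). if j < a then X $$ (i,j) * f j else 0)"
proof (rule eq_matI)
  fix i j assume ij: "i < dim_row (mat n b (\<lambda>(i,j). if j < a then X $$ (i,j) * f j else 0))"
    "j < dim_col (mat n b (\<lambda>(i,j). if j < a then X $$ (i,j) * f j else 0))"
  have "(X * dmat a b f) $$ (i,j) = (\<Sum>l\<in>{0..<a}. X $$ (i,l) * (if l = j then f l else 0))"
    using assms ij by (auto simp: scalar_prod_def)
  also have "\<dots> = (\<Sum>l\<in>{0..<a}. if l = j then X $$ (i,l) * f l else 0)"
    by (rule sum.cong, auto)
  also have "\<dots> = (if j < a then X $$ (i,j) * f j else 0)" by simp
  finally show "(X * dmat a b f) $$ (i,j) = mat n b (\<lambda>(i,j). if j < a then X $$ (i,j) * f j else 0) $$ (i,j)"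
    using ij by simp
qed (insert assms, auto)

lemma dmat_mult: assumes "Y \<in> carrier_mat b n"
  shows "dmat a b f * Y = mat a n (\<lambda>(i,j). if i < b then f i * Y $$ (i,j) else 0)"
proof (rule eq_matI)
  fix i j assume ij: "i < dim_row (mat a n (\<lambda>(i,j). if i < b then f i * Y $$ (i,j) else 0))"
    "j < dim_col (mat a n (\<lambda>(i,j). if i < b then f i * Y $$ (i,j) else 0))"
  have "(dmat a b f * Y) $$ (i,j) = (\<Sum>l\<in>{0..<b}. (if i = l then f i else 0) * Y $$ (l,j))"
    using assms ij by (auto simp: scalar_prod_def)
  also have "\<dots> = (\<Sum>l\<in>{0..<b}. if i = l then f i * Y $$ (i,j) else 0)"
    by (rule sum.cong, auto)
  also have "\<dots> = (if i < b then f i * Y $$ (i,j) else 0)" by simp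
  finally show "(dmat a b f * Y) $$ (i,j) = mat a n (\<lambda>(i,j). if i < b then f i * Y $$ (i,j) else 0) $$ (i,j)"
    using ij by simp
qed (insert assms, auto)

lemma foldr_mats: "(\<forall>l\<in>set xs. f l \<in> carrier_mat nr nc) \<Longrightarrow>
  foldr (\<lambda>i A. f i + A) xs (0\<^sub>m nr nc) \<in> carrier_mat nr nc \<and>
  (\<forall>i<nr. \<forall>j<nc. foldr (\<lambda>i A. f i + A) xs (0\<^sub>m nr nc) $$ (i,j) = sum_list (map (\<lambda>l. f l $$ (i,j)) xs))"
  by (induction xs, auto)

lemma sum_mats_carrier: "(\<And>l. a \<le> l \<Longrightarrow> l < b \<Longrightarrow> f l \<in> carrier_mat nr nc) \<Longrightarrow> sum_mats nr nc f a b \<in> carrier_mat nr nc"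
  unfolding sum_mats_def using foldr_mats[of "[a..<b]" f nr nc] by auto

lemma sum_mats_index: "(\<And>l. a \<le> l \<Longrightarrow> l < b \<Longrightarrow> f l \<in> carrier_mat nr nc) \<Longrightarrow> i < nr \<Longrightarrow> j < nc \<Longrightarrow>
   sum_mats nr nc f a b $$ (i,j) = (\<Sum>l\<in>{a..<b}. f l $$ (i,j))"
  unfolding sum_mats_def using foldr_mats[of "[a..<b]" f nr nc] by (auto simp: sum_list_distinct_conv_sum_set)

lemma outer_carrier[simp]: "outer v w \<in> carrier_mat (dim_vec v) (dim_vec w)" by (simp add: outer_def)
lemma outer_index[simp]: "i < dim_vec v \<Longrightarrow> j < dim_vec w \<Longrightarrow> outer v w $$ (i,j) = v $ i * w $ j"
  by (simp add: outer_def)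

lemma outer_col_carrier: "X \<in> carrier_mat n m1 \<Longrightarrow> Y \<in> carrier_mat n m2 \<Longrightarrow> outer (col X a) (col Y b) \<in> carrier_mat n n"
  by (simp add: outer_def)
lemma outer_col_carrier2: "X \<in> carrier_mat n m1 \<Longrightarrow> Y \<in> carrier_mat n m2 \<Longrightarrow> (c::real) \<cdot>\<^sub>m outer (col X a) (col Y b) \<in> carrier_mat n n"
  by (simp add: outer_def)

lemma minv_eq: fixes G :: "real mat" assumes G: "G \<in> carrier_mat m m" and H: "H \<in> carrier_mat m m" and HG: "H * G = 1\<^sub>m m"
  shows "minv G = H"
proof -
  have GH: "G * H = 1\<^sub>m m" using mat_mult_left_right_inverse[OF H G HG] .
  have U: "G \<in> Units (ring_mat TYPE(real) m ())"
    using G H GH HG unfolding Units_def ring_mat_def by auto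
  obtain B where B: "mat_inverse G = Some B"
    using mat_inverse(1)[OF G, of "()"] U by (cases "mat_inverse G", auto)
  from mat_inverse(2)[OF G B] have BG: "B * G = 1\<^sub>m m" and Bc: "B \<in> carrier_mat m m" by auto
  have "B = B * (G * H)" using Bc GH by simp
  also have "\<dots> = (B * G) * H" using Bc G H by (simp add: assoc_mult_mat)
  also have "\<dots> = H" using BG H by simp
  finally show ?thesis unfolding minv_def B by simp
qed

lemma col_col_range: "j < b - a \<Longrightarrow> b \<le> dim_col X \<Longrightarrow> col (col_range X a b) j = col X (a + j)"
  by (intro eq_vecI, auto simp: col_range_def)

lemma crT: assumes X: "X \<in> carrier_mat n m1" and Y: "Y \<in> carrier_mat n m2" and "b \<le> m1" "d \<le> m2"
  shows "transpose_mat (col_range X a b) * col_range Y c d = mat (b - a) (d - c) (\<lambda>(i,j). (transpose_mat X * Y) $$ (a+i, c+j))"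
  by (rule eq_matI, insert assms, auto simp: col_col_range)

lemma dmat_mult_dmat: "dmat a b f * dmat b c g = dmat a c (\<lambda>i. if i < b then f i * g i else 0)"
  by (subst mult_dmat[of _ a b], auto intro!: eq_matI)

lemma dmat_add: "dmat a b f + dmat a b g = dmat a b (\<lambda>i. f i + g i)"
  by (auto intro!: eq_matI)

lemma dmat_one: "1\<^sub>m a = dmat a a (\<lambda>_. 1)" by (auto intro!: eq_matI)
lemma dmat_zero: "0\<^sub>m a b = dmat a b (\<lambda>_. 0)" by (auto intro!: eq_matI)
lemma dmat_eq: "(\<And>i. i < a \<Longrightarrow> i < b \<Longrightarrow> f i = g i) \<Longrightarrow> dmat a b f = dmat a b g"
  by (auto intro!: eq_matI)

lemma sum_shift: fixes f :: "nat \<Rightarrow> real" shows "r \<le> m \<Longrightarrow> (\<Sum>l\<in>{0..<m-r}. f (r + l)) = (\<Sum>l\<in>{r..<m}. f l)"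
  using sum.shift_bounds_nat_ivl[of f 0 r "m-r"] by (simp add: add.commute)

lemma L1: assumes X: "X \<in> carrier_mat n m" and Y: "Y \<in> carrier_mat n m" and rs: "r + s \<le> m"
  and i: "i < n" and j: "j < n"
  shows "(col_range X r m * dmat (m-r) (m-r) (\<lambda>l. if l < s then c (r+l) else 1) * transpose_mat (col_range Y r m)) $$ (i,j)
    = (\<Sum>l\<in>{r..<r+s}. c l * (X $$ (i,l) * Y $$ (j,l))) + (\<Sum>l\<in>{r+s..<m}. X $$ (i,l) * Y $$ (j,l))"
proof -
  let ?g = "\<lambda>l. (if l < r + s then c l else 1) * (X $$ (i,l) * Y $$ (j,l))"
  have "(col_range X r m * dmat (m-r) (m-r) (\<lambda>l. if l < s then c (r+l) else 1) * transpose_mat (col_range Y r m)) $$ (i,j)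
     = (\<Sum>l\<in>{0..<m-r}. ?g (r + l))"
    using X Y i j by (subst mult_dmat[of _ n], auto simp: scalar_prod_def intro!: sum.cong)
  also have "\<dots> = (\<Sum>l\<in>{r..<m}. ?g l)" by (rule sum_shift[of r m ?g], use rs in simp)
  also have "\<dots> = (\<Sum>l\<in>{r..<r+s}. ?g l) + (\<Sum>l\<in>{r+s..<m}. ?g l)"
    using rs by (subst sum.atLeastLessThan_concat[symmetric], auto)
  also have "\<dots> = (\<Sum>l\<in>{r..<r+s}. c l * (X $$ (i,l) * Y $$ (j,l))) + (\<Sum>l\<in>{r+s..<m}. X $$ (i,l) * Y $$ (j,l))"
    by (intro arg_cong2[where f="(+)"] sum.cong, auto)
  finally show ?thesis .
qed

lemma L2: assumes X: "X \<in> carrier_mat n m1" and Y: "Y \<in> carrier_mat n m2" and rs: "r + s \<le> m1" "r + s \<le> m2"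
  and i: "i < n" and j: "j < n"
  shows "(col_range X r m1 * dmat (m1-r) (m2-r) (\<lambda>l. if l < s then - c (r+l) else 0) * transpose_mat (col_range Y r m2)) $$ (i,j)
    = - (\<Sum>l\<in>{r..<r+s}. c l * (X $$ (i,l) * Y $$ (j,l)))"
proof -
  let ?g = "\<lambda>l. (if l < r + s then - c l else 0) * (X $$ (i,l) * Y $$ (j,l))"
  have "(col_range X r m1 * dmat (m1-r) (m2-r) (\<lambda>l. if l < s then - c (r+l) else 0) * transpose_mat (col_range Y r m2)) $$ (i,j)
     = (\<Sum>l\<in>{0..<m2-r}. ?g (r + l))"
    using X Y i j rs by (subst mult_dmat[of _ n], auto simp: scalar_prod_def intro!: sum.cong)
  also have "\<dots> = (\<Sum>l\<in>{r..<m2}. ?g l)" by (rule sum_shift[of r m2 ?g], use rs in simp)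
  also have "\<dots> = (\<Sum>l\<in>{r..<r+s}. ?g l) + (\<Sum>l\<in>{r+s..<m2}. ?g l)"
    using rs by (subst sum.atLeastLessThan_concat[symmetric], auto)
  also have "\<dots> = (\<Sum>l\<in>{r..<r+s}. - (c l * (X $$ (i,l) * Y $$ (j,l))))"
    by (auto intro!: sum.cong)
  finally show ?thesis by (simp add: sum_negf)
qed

lemma vec_sq_nonneg: "(v :: real vec) \<bullet> v \<ge> 0"
  unfolding scalar_prod_def by (auto intro!: sum_nonneg)

lemma norm_lemma: assumes A: "A \<in> carrier_mat n q" and AA: "transpose_mat A * A = 1\<^sub>m q"
  and y: "y \<in> carrier_vec n"
  shows "vnorm (transpose_mat A *\<^sub>v y) \<le> vnorm (y :: real vec)"
proof -
  define z where "z = transpose_mat A *\<^sub>v y"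
  have z: "z \<in> carrier_vec q" using A y by (simp add: z_def)
  have Az: "A *\<^sub>v z \<in> carrier_vec n" using A z by simp
  have "transpose_mat A *\<^sub>v (A *\<^sub>v z) = z"
    using A z AA by (simp flip: assoc_mult_mat_vec[of _ q n])
  hence 1: "(A *\<^sub>v z) \<bullet> (A *\<^sub>v z) = z \<bullet> z"
    using transpose_vec_mult_scalar[OF A z Az] by simp
  have 2: "y \<bullet> (A *\<^sub>v z) = z \<bullet> z"
    using transpose_vec_mult_scalar[OF A z y] by (simp add: z_def)
  have 3: "(A *\<^sub>v z) \<bullet> y = z \<bullet> z" using 2 comm_scalar_prod[OF y Az] by simp
  have "0 \<le> (y - A *\<^sub>v z) \<bullet> (y - A *\<^sub>v z)" by (rule vec_sq_nonneg)
  also have "\<dots> = y \<bullet> y - z \<bullet> z"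
    using y Az 1 2 3 by (simp add: minus_scalar_prod_distrib[of _ n] scalar_prod_minus_distrib[of _ n])
  finally show ?thesis unfolding vnorm_def z_def[symmetric] by simp
qed

lemma hcat_zero: "X \<in> carrier_mat n a \<Longrightarrow> hcat X (0\<^sub>m n 0) = X"
  unfolding hcat_def by (auto intro!: eq_matI)

lemma a4: "A \<in> carrier_mat a b \<Longrightarrow> B \<in> carrier_mat b c \<Longrightarrow> C \<in> carrier_mat c d \<Longrightarrow> D \<in> carrier_mat d e
  \<Longrightarrow> A * B * (C * D) = A * (B * C) * D"
proof -
  assume c: "A \<in> carrier_mat a b" "B \<in> carrier_mat b c" "C \<in> carrier_mat c d" "D \<in> carrier_mat d e"
  have "A * B * (C * D) = A * (B * (C * D))" using c by (intro assoc_mult_mat[of _ a b _ c _ e], auto)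
  also have "B * (C * D) = (B * C) * D" using c by (intro assoc_mult_mat[of _ b c _ d _ e, symmetric], auto)
  also have "A * ((B * C) * D) = (A * (B * C)) * D" using c by (intro assoc_mult_mat[of _ a b _ d _ e, symmetric], auto)
  finally show ?thesis .
qed

lemma part1:
  fixes n p K r s :: nat
    and Z W U V Sig Zt Wt :: "real mat"
  assumes Z: "Z \<in> carrier_mat n p" and ZZ: "transpose_mat Z * Z = 1\<^sub>m p"
    and W: "W \<in> carrier_mat n K" and WW: "transpose_mat W * W = 1\<^sub>m K"
    and U: "U \<in> carrier_mat p p" and UU: "transpose_mat U * U = 1\<^sub>m p"
    and V: "V \<in> carrier_mat K K" and VV: "transpose_mat V * V = 1\<^sub>m K"
    and Sig: "Sig \<in> carrier_mat p K"
    and svd: "transpose_mat Z * W = U * Sig * transpose_mat V"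
    and Zt: "Zt = Z * U" and Wt: "Wt = W * V"
  shows "transpose_mat Zt * Zt = 1\<^sub>m p" "transpose_mat Wt * Wt = 1\<^sub>m K" "transpose_mat Zt * Wt = Sig"
proof -
  have tZ: "transpose_mat Zt = transpose_mat U * transpose_mat Z" using Z U Zt transpose_mult by blast
  have tW: "transpose_mat Wt = transpose_mat V * transpose_mat W" using W V Wt transpose_mult by blast
  have "transpose_mat Zt * Zt = transpose_mat U * (transpose_mat Z * Z) * U"
    unfolding tZ unfolding Zt using Z U by (intro a4, auto)
  thus "transpose_mat Zt * Zt = 1\<^sub>m p" using ZZ UU U by simp
  have "transpose_mat Wt * Wt = transpose_mat V * (transpose_mat W * W) * V"
    unfolding tW unfolding Wt using W V by (intro a4, auto)
  thus "transpose_mat Wt * Wt = 1\<^sub>m K" using WW VV V by simp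
  have "transpose_mat Zt * Wt = transpose_mat U * (transpose_mat Z * W) * V"
    unfolding tZ unfolding Wt using Z U W V by (intro a4, auto)
  also have "\<dots> = Sig"
  proof -
    have "transpose_mat U * (U * Sig * transpose_mat V) = transpose_mat U * (U * (Sig * transpose_mat V))"
      using U Sig V by (subst assoc_mult_mat[of _ p p _ K _ K], auto)
    also have "\<dots> = (transpose_mat U * U) * (Sig * transpose_mat V)"
      using U Sig V by (subst assoc_mult_mat[of _ p p _ p _ K], auto)
    also have "\<dots> = Sig * transpose_mat V" using UU Sig V by simp
    finally have "transpose_mat U * (U * Sig * transpose_mat V) * V = Sig * transpose_mat V * V" by simp
    also have "\<dots> = Sig * (transpose_mat V * V)" using Sig V by (subst assoc_mult_mat[of _ p K _ K _ K], auto)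
    finally have "transpose_mat U * (U * Sig * transpose_mat V) * V = Sig" using VV Sig by simp
    thus ?thesis unfolding svd .
  qed
  finally show "transpose_mat Zt * Wt = Sig" .
qed

lemma sig_arith: assumes "0 < (x::real)" "x < 1"
  shows "1 / (1 - x\<^sup>2) + - (x / (1 - x\<^sup>2)) * x = 1" "(1 / (1 - x\<^sup>2)) * x + - (x / (1 - x\<^sup>2)) = 0"
proof -
  have "1 - x\<^sup>2 \<noteq> 0" proof -
    have "x * x < 1 * 1" using assms by (intro mult_strict_mono, auto)
    thus ?thesis by (simp add: power2_eq_square)
  qed
  thus "1 / (1 - x\<^sup>2) + - (x / (1 - x\<^sup>2)) * x = 1" "(1 / (1 - x\<^sup>2)) * x + - (x / (1 - x\<^sup>2)) = 0"
    by (auto simp: field_simps power2_eq_square)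
qed

theorem lemma1:
  fixes n p K r s :: nat
    and Z W U V Sig Zt Wt M PC PN :: "real mat"
  assumes Z: "Z \<in> carrier_mat n p" and ZZ: "transpose_mat Z * Z = 1\<^sub>m p"
    and W: "W \<in> carrier_mat n K" and WW: "transpose_mat W * W = 1\<^sub>m K"
    and U: "U \<in> carrier_mat p p" and UU: "transpose_mat U * U = 1\<^sub>m p" and UU': "U * transpose_mat U = 1\<^sub>m p"
    and V: "V \<in> carrier_mat K K" and VV: "transpose_mat V * V = 1\<^sub>m K" and VV': "V * transpose_mat V = 1\<^sub>m K"
    and Sig: "Sig \<in> carrier_mat p K"
    and svd: "transpose_mat Z * W = U * Sig * transpose_mat V"
    and diag: "\<forall>i<p. \<forall>j<K. i \<noteq> j \<longrightarrow> Sig $$ (i,j) = 0"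
    and rs: "r + s \<le> min p K"
    and sig_one: "\<forall>i<r. Sig $$ (i,i) = 1"
    and sig_mid: "\<forall>i. r \<le> i \<and> i < r + s \<longrightarrow> 0 < Sig $$ (i,i) \<and> Sig $$ (i,i) < 1"
    and sig_mono: "\<forall>i j. r \<le> i \<and> i \<le> j \<and> j < r + s \<longrightarrow> Sig $$ (j,j) \<le> Sig $$ (i,i)"
    and sig_zero: "\<forall>i. r + s \<le> i \<and> i < min p K \<longrightarrow> Sig $$ (i,i) = 0"
    and Zt: "Zt = Z * U" and Wt: "Wt = W * V"
    and M: "M = hcat (col_range Zt r p) (col_range Wt r K)"
    and PC: "PC = hcat (col_range Zt r p) (0\<^sub>m n (K - r)) * minv (transpose_mat M * M) * transpose_mat M"
    and PN: "PN = hcat (0\<^sub>m n (p - r)) (col_range Wt r K) * minv (transpose_mat M * M) * transpose_mat M"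
  shows
    "(PC + PN = M * minv (transpose_mat M * M) * transpose_mat M
      \<and> transpose_mat (PC + PN) = PC + PN
      \<and> (PC + PN) * (PC + PN) = PC + PN
      \<and> (PC + PN) * M = M
      \<and> (\<forall>x \<in> carrier_vec n. \<exists>c \<in> carrier_vec (dim_col M). (PC + PN) *\<^sub>v x = M *\<^sub>v c))
   \<and> (PC = sum_mats n n (\<lambda>i. (1 / (1 - (Sig $$ (i,i))\<^sup>2)) \<cdot>\<^sub>m outer (col Zt i) (col Zt i)) r (r + s)
          - sum_mats n n (\<lambda>i. (Sig $$ (i,i) / (1 - (Sig $$ (i,i))\<^sup>2)) \<cdot>\<^sub>m outer (col Zt i) (col Wt i)) r (r + s)
          + sum_mats n n (\<lambda>i. outer (col Zt i) (col Zt i)) (r + s) p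
      \<and> PN = sum_mats n n (\<lambda>i. (1 / (1 - (Sig $$ (i,i))\<^sup>2)) \<cdot>\<^sub>m outer (col Wt i) (col Wt i)) r (r + s)
          - sum_mats n n (\<lambda>i. (Sig $$ (i,i) / (1 - (Sig $$ (i,i))\<^sup>2)) \<cdot>\<^sub>m outer (col Wt i) (col Zt i)) r (r + s)
          + sum_mats n n (\<lambda>i. outer (col Wt i) (col Wt i)) (r + s) K)
   \<and> (\<forall>c \<in> carrier_vec (p - r). \<forall>d \<in> carrier_vec (K - r).
        PC *\<^sub>v (col_range Zt r p *\<^sub>v c + col_range Wt r K *\<^sub>v d) = col_range Zt r p *\<^sub>v c
      \<and> PN *\<^sub>v (col_range Zt r p *\<^sub>v c + col_range Wt r K *\<^sub>v d) = col_range Wt r K *\<^sub>v d)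
   \<and> (\<forall>x \<in> carrier_vec n.
        vnorm (transpose_mat (col_range Zt r p) *\<^sub>v x) \<le> vnorm (transpose_mat PC *\<^sub>v x))"

proof -
  define q where "q = p - r"
  define k where "k = K - r"
  have rp: "r + s \<le> p" "r + s \<le> K" using rs by auto
  have Zt_c: "Zt \<in> carrier_mat n p" using Z U Zt by simp
  have Wt_c: "Wt \<in> carrier_mat n K" using W V Wt by simp
  have dZ: "dim_row Zt = n" "dim_col Zt = p" using Zt_c by auto
  have dW: "dim_row Wt = n" "dim_col Wt = K" using Wt_c by auto
  note P1 = part1[OF Z ZZ W WW U UU V VV Sig svd Zt Wt]
  define A where "A = col_range Zt r p"
  define B where "B = col_range Wt r K"
  have A_c: "A \<in> carrier_mat n q" using Zt_c unfolding A_def q_def by auto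
  have B_c: "B \<in> carrier_mat n k" using Wt_c unfolding B_def k_def by auto
  have AA: "transpose_mat A * A = 1\<^sub>m q"
    unfolding A_def using crT[OF Zt_c Zt_c, where a=r and b=p and c=r and d=p] P1(1) by (auto simp: q_def intro!: eq_matI)
  have BB: "transpose_mat B * B = 1\<^sub>m k"
    unfolding B_def using crT[OF Wt_c Wt_c, where a=r and b=K and c=r and d=K] P1(2) by (auto simp: k_def intro!: eq_matI)
  define sg where "sg = (\<lambda>i. Sig $$ (r+i, r+i))"
  have AB: "transpose_mat A * B = dmat q k sg"
    unfolding A_def B_def using crT[OF Zt_c Wt_c, where a=r and b=p and c=r and d=K] P1(3) diag Sig
    by (auto simp: q_def k_def sg_def intro!: eq_matI)
  have BA: "transpose_mat B * A = dmat k q sg"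
  proof -
    have "transpose_mat (transpose_mat A * B) = transpose_mat B * A"
      using A_c B_c by (subst transpose_mult[of _ q n _ k], auto)
    thus ?thesis unfolding AB transpose_dmat by simp
  qed
  have M': "M = hcat A B" unfolding M A_def B_def ..
  have M_c: "M \<in> carrier_mat n (q + k)" unfolding M' using hcat_carrier[OF A_c B_c] .
  have G: "transpose_mat M * M = four_block_mat (1\<^sub>m q) (dmat q k sg) (dmat k q sg) (1\<^sub>m k)"
    unfolding M' using hcat_transpose_mult[OF A_c B_c A_c B_c] AA AB BA BB by simp
  define d1 where "d1 = (\<lambda>i. if i < s then 1 / (1 - (Sig $$ (r+i, r+i))\<^sup>2) else (1::real))"
  define nd2 where "nd2 = (\<lambda>i. if i < s then - (Sig $$ (r+i, r+i) / (1 - (Sig $$ (r+i, r+i))\<^sup>2)) else (0::real))"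
  define H where "H = four_block_mat (dmat q q d1) (dmat q k nd2) (dmat k q nd2) (dmat k k d1)"
  have H_c: "H \<in> carrier_mat (q + k) (q + k)" unfolding H_def by auto
  have sq: "s \<le> q" "s \<le> k" using rs by (auto simp: q_def k_def)
  have sg_mid: "\<And>i. i < s \<Longrightarrow> 0 < sg i \<and> sg i < 1" using sig_mid unfolding sg_def by auto
  have sg_zero: "\<And>i. s \<le> i \<Longrightarrow> i < q \<Longrightarrow> i < k \<Longrightarrow> sg i = 0"
  proof -
    fix i assume "s \<le> i" "i < q" "i < k"
    hence "r + s \<le> r + i \<and> r + i < min p K" by (auto simp: q_def k_def)
    thus "sg i = 0" using sig_zero unfolding sg_def by blast
  qed
  have HG: "H * (transpose_mat M * M) = 1\<^sub>m (q + k)"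
  proof -
    have "H * (transpose_mat M * M) = four_block_mat
       (dmat q q d1 * 1\<^sub>m q + dmat q k nd2 * dmat k q sg) (dmat q q d1 * dmat q k sg + dmat q k nd2 * 1\<^sub>m k)
       (dmat k q nd2 * 1\<^sub>m q + dmat k k d1 * dmat k q sg) (dmat k q nd2 * dmat q k sg + dmat k k d1 * 1\<^sub>m k)"
      unfolding G H_def by (rule mult_four_block_mat, auto)
    also have "\<dots> = four_block_mat (1\<^sub>m q) (0\<^sub>m q k) (0\<^sub>m k q) (1\<^sub>m k)"
      unfolding dmat_one dmat_zero dmat_mult_dmat dmat_add
      by (intro cong_four_block_mat dmat_eq, insert sg_mid sg_zero sig_arith sq,
          auto simp: d1_def nd2_def sg_def)
    finally show ?thesis by simp
  qed
  have Gc: "transpose_mat M * M \<in> carrier_mat (q + k) (q + k)" using M_c by auto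
  have minvG: "minv (transpose_mat M * M) = H" using minv_eq[OF Gc H_c HG] .
  have HT: "transpose_mat H = H" unfolding H_def
    by (subst transpose_four_block_mat[of _ q q _ k _ k], auto simp: transpose_dmat)
  define X1 where "X1 = hcat A (0\<^sub>m n k)"
  define X2 where "X2 = hcat (0\<^sub>m n q) B"
  have X1_c: "X1 \<in> carrier_mat n (q + k)" unfolding X1_def using hcat_carrier[OF A_c, of "0\<^sub>m n k" k] by auto
  have X2_c: "X2 \<in> carrier_mat n (q + k)" unfolding X2_def using hcat_carrier[OF _ B_c, of "0\<^sub>m n q" q] by auto
  have PC': "PC = X1 * H * transpose_mat M" unfolding PC minvG X1_def A_def k_def ..
  have PN': "PN = X2 * H * transpose_mat M" unfolding PN minvG X2_def B_def q_def ..
  have X1H: "X1 * H = hcat (A * dmat q q d1) (A * dmat q k nd2)"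
    unfolding X1_def H_def using A_c by (subst hcat_mult_four[of _ n q _ k _ q _ k], auto)
  have X2H: "X2 * H = hcat (B * dmat k q nd2) (B * dmat k k d1)"
    unfolding X2_def H_def using B_c by (subst hcat_mult_four[of _ n q _ k _ q _ k], auto)
  have PC_eq: "PC = A * dmat q q d1 * transpose_mat A + A * dmat q k nd2 * transpose_mat B"
    unfolding PC' X1H M' using A_c B_c by (subst hcat_mult_transpose[of _ n q _ k _ n], auto)
  have PN_eq: "PN = B * dmat k q nd2 * transpose_mat A + B * dmat k k d1 * transpose_mat B"
    unfolding PN' X2H M' using A_c B_c by (subst hcat_mult_transpose[of _ n q _ k _ n], auto)
  have MT_c: "transpose_mat M \<in> carrier_mat (q + k) n" using M_c by auto
  have PCM: "PC * M = X1"
  proof -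
    have "PC * M = X1 * H * (transpose_mat M * M)" unfolding PC'
      using X1_c H_c MT_c M_c by (intro assoc_mult_mat[of _ n "q+k" _ n _ "q+k"], auto)
    also have "\<dots> = X1 * (H * (transpose_mat M * M))"
      using X1_c H_c Gc by (intro assoc_mult_mat[of _ n "q+k" _ "q+k" _ "q+k"], auto)
    finally show ?thesis unfolding HG using X1_c by simp
  qed
  have PNM: "PN * M = X2"
  proof -
    have "PN * M = X2 * H * (transpose_mat M * M)" unfolding PN'
      using X2_c H_c MT_c M_c by (intro assoc_mult_mat[of _ n "q+k" _ n _ "q+k"], auto)
    also have "\<dots> = X2 * (H * (transpose_mat M * M))"
      using X2_c H_c Gc by (intro assoc_mult_mat[of _ n "q+k" _ "q+k" _ "q+k"], auto)
    finally show ?thesis unfolding HG using X2_c by simp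
  qed
  define R where "R = H * transpose_mat M"
  have R_c: "R \<in> carrier_mat (q + k) n" unfolding R_def using H_c MT_c by auto
  have RM: "R * M = 1\<^sub>m (q + k)" unfolding R_def using H_c MT_c M_c HG
    by (subst assoc_mult_mat[of _ "q+k" "q+k" _ n _ "q+k"], auto)
  have Q: "PC + PN = M * R"
  proof -
    have "PC + PN = (X1 * H + X2 * H) * transpose_mat M" unfolding PC' PN'
      using X1_c X2_c H_c MT_c by (subst add_mult_distrib_mat[of _ n "q+k"], auto)
    also have "X1 * H + X2 * H = (X1 + X2) * H"
      using X1_c X2_c H_c by (subst add_mult_distrib_mat[of _ n "q+k"], auto)
    also have "X1 + X2 = M" unfolding X1_def X2_def M' using A_c B_c
      by (subst hcat_add[of _ n q _ k], auto)
    finally show ?thesis unfolding R_def using assoc_mult_mat[OF M_c H_c MT_c] by simp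
  qed
  have part_i: "PC + PN = M * minv (transpose_mat M * M) * transpose_mat M
      \<and> transpose_mat (PC + PN) = PC + PN
      \<and> (PC + PN) * (PC + PN) = PC + PN
      \<and> (PC + PN) * M = M
      \<and> (\<forall>x \<in> carrier_vec n. \<exists>c \<in> carrier_vec (dim_col M). (PC + PN) *\<^sub>v x = M *\<^sub>v c)"
  proof (intro conjI ballI)
    show "PC + PN = M * minv (transpose_mat M * M) * transpose_mat M"
      unfolding Q minvG R_def using M_c H_c MT_c by (subst assoc_mult_mat[of _ n "q+k" _ "q+k" _ n], auto)
    have "transpose_mat (M * R) = transpose_mat R * transpose_mat M" using M_c R_c by (rule transpose_mult)
    also have "transpose_mat R = M * H" unfolding R_def
      using transpose_mult[OF H_c MT_c] HT by simp
    also have "M * H * transpose_mat M = M * R" unfolding R_def using M_c H_c MT_c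
      by (subst assoc_mult_mat[of _ n "q+k" _ "q+k" _ n], auto)
    finally show "transpose_mat (PC + PN) = PC + PN" unfolding Q .
    have "M * R * (M * R) = M * (R * M) * R" using a4[OF M_c R_c M_c R_c] .
    thus "(PC + PN) * (PC + PN) = PC + PN" unfolding Q RM using M_c by simp
    have "M * R * M = M * (R * M)" using assoc_mult_mat[OF M_c R_c M_c] .
    thus "(PC + PN) * M = M" unfolding Q RM using M_c by simp
    fix x :: "real vec" assume x: "x \<in> carrier_vec n"
    show "\<exists>c \<in> carrier_vec (dim_col M). (PC + PN) *\<^sub>v x = M *\<^sub>v c"
      by (rule bexI[of _ "R *\<^sub>v x"], unfold Q, insert M_c R_c x, auto)
  qed
  have PC_c: "PC \<in> carrier_mat n n" unfolding PC' using X1_c H_c MT_c by auto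
  have PN_c: "PN \<in> carrier_mat n n" unfolding PN' using X2_c H_c MT_c by auto
  have part_iii: "\<forall>c \<in> carrier_vec (p - r). \<forall>d \<in> carrier_vec (K - r).
        PC *\<^sub>v (col_range Zt r p *\<^sub>v c + col_range Wt r K *\<^sub>v d) = col_range Zt r p *\<^sub>v c
      \<and> PN *\<^sub>v (col_range Zt r p *\<^sub>v c + col_range Wt r K *\<^sub>v d) = col_range Wt r K *\<^sub>v d"
  proof (intro ballI conjI)
    fix c d :: "real vec" assume c: "c \<in> carrier_vec (p - r)" and d: "d \<in> carrier_vec (K - r)"
    hence c': "c \<in> carrier_vec q" and d': "d \<in> carrier_vec k" unfolding q_def k_def .
    have cd: "c @\<^sub>v d \<in> carrier_vec (q + k)" using c' d' by auto
    have e: "col_range Zt r p *\<^sub>v c + col_range Wt r K *\<^sub>v d = M *\<^sub>v (c @\<^sub>v d)"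
      unfolding M' A_def[symmetric] B_def[symmetric] using hcat_mult_vec[OF A_c B_c c' d'] by simp
    have "PC *\<^sub>v (M *\<^sub>v (c @\<^sub>v d)) = (PC * M) *\<^sub>v (c @\<^sub>v d)"
      using assoc_mult_mat_vec[OF PC_c M_c cd] by simp
    also have "\<dots> = A *\<^sub>v c + 0\<^sub>m n k *\<^sub>v d" unfolding PCM X1_def
      using hcat_mult_vec[OF A_c _ c' d'] by simp
    also have "\<dots> = A *\<^sub>v c" using A_c c' d' by auto
    finally show "PC *\<^sub>v (col_range Zt r p *\<^sub>v c + col_range Wt r K *\<^sub>v d) = col_range Zt r p *\<^sub>v c"
      unfolding e A_def .
    have "PN *\<^sub>v (M *\<^sub>v (c @\<^sub>v d)) = (PN * M) *\<^sub>v (c @\<^sub>v d)"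
      using assoc_mult_mat_vec[OF PN_c M_c cd] by simp
    also have "\<dots> = 0\<^sub>m n q *\<^sub>v c + B *\<^sub>v d" unfolding PNM X2_def
      using hcat_mult_vec[OF _ B_c c' d'] by simp
    also have "\<dots> = B *\<^sub>v d" using B_c c' d' by auto
    finally show "PN *\<^sub>v (col_range Zt r p *\<^sub>v c + col_range Wt r K *\<^sub>v d) = col_range Wt r K *\<^sub>v d"
      unfolding e B_def .
  qed
  define J :: "real mat" where "J = four_block_mat (1\<^sub>m q) (0\<^sub>m q 0) (0\<^sub>m k q) (0\<^sub>m k 0)"
  have J_c: "J \<in> carrier_mat (q + k) q" unfolding J_def by auto
  have MJ: "M * J = A"
  proof -
    have "M * J = hcat (A * 1\<^sub>m q + B * 0\<^sub>m k q) (A * 0\<^sub>m q 0 + B * 0\<^sub>m k 0)"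
      unfolding M' J_def using A_c B_c by (subst hcat_mult_four[of _ n q _ k _ q _ 0], auto)
    also have "\<dots> = hcat A (0\<^sub>m n 0)" using A_c B_c by simp
    finally show ?thesis using hcat_zero[OF A_c] by simp
  qed
  have PCA: "PC * A = A"
  proof -
    have "PC * A = (PC * M) * J" unfolding MJ[symmetric] using assoc_mult_mat[OF PC_c M_c J_c] by simp
    also have "\<dots> = hcat (A * 1\<^sub>m q + 0\<^sub>m n k * 0\<^sub>m k q) (A * 0\<^sub>m q 0 + 0\<^sub>m n k * 0\<^sub>m k 0)"
      unfolding PCM X1_def J_def using A_c by (subst hcat_mult_four[of _ n q _ k _ q _ 0], auto)
    also have "\<dots> = hcat A (0\<^sub>m n 0)" using A_c by simp
    finally show ?thesis using hcat_zero[OF A_c] by simp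
  qed
  have part_iv: "\<forall>x \<in> carrier_vec n.
        vnorm (transpose_mat (col_range Zt r p) *\<^sub>v x) \<le> vnorm (transpose_mat PC *\<^sub>v x)"
  proof
    fix x :: "real vec" assume x: "x \<in> carrier_vec n"
    have tt: "transpose_mat A * transpose_mat PC = transpose_mat A"
      using transpose_mult[OF PC_c A_c] PCA by simp
    have "transpose_mat A *\<^sub>v x = transpose_mat A *\<^sub>v (transpose_mat PC *\<^sub>v x)"
      using assoc_mult_mat_vec[of "transpose_mat A" q n "transpose_mat PC" n x] A_c PC_c x tt by simp
    moreover have "vnorm (transpose_mat A *\<^sub>v (transpose_mat PC *\<^sub>v x)) \<le> vnorm (transpose_mat PC *\<^sub>v x)"
      using norm_lemma[OF A_c AA, of "transpose_mat PC *\<^sub>v x"] PC_c x by simp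
    ultimately show "vnorm (transpose_mat (col_range Zt r p) *\<^sub>v x) \<le> vnorm (transpose_mat PC *\<^sub>v x)"
      unfolding A_def by simp
  qed
  have part_ii_C: "PC = sum_mats n n (\<lambda>i. (1 / (1 - (Sig $$ (i,i))\<^sup>2)) \<cdot>\<^sub>m outer (col Zt i) (col Zt i)) r (r + s)
          - sum_mats n n (\<lambda>i. (Sig $$ (i,i) / (1 - (Sig $$ (i,i))\<^sup>2)) \<cdot>\<^sub>m outer (col Zt i) (col Wt i)) r (r + s)
          + sum_mats n n (\<lambda>i. outer (col Zt i) (col Zt i)) (r + s) p"
    (is "_ = ?S1 - ?S2 + ?S3")
  proof -
    have c1: "?S1 \<in> carrier_mat n n" using Zt_c by (intro sum_mats_carrier, auto intro: outer_col_carrier outer_col_carrier2)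
    have c2: "?S2 \<in> carrier_mat n n" using Zt_c Wt_c by (intro sum_mats_carrier, auto intro: outer_col_carrier outer_col_carrier2)
    have c3: "?S3 \<in> carrier_mat n n" using Zt_c by (intro sum_mats_carrier, auto intro: outer_col_carrier outer_col_carrier2)
    show ?thesis
    proof (rule eq_matI)
      fix i j assume "i < dim_row (?S1 - ?S2 + ?S3)" "j < dim_col (?S1 - ?S2 + ?S3)"
      hence i: "i < n" and j: "j < n" using c1 c2 c3 by auto
      have e1: "?S1 $$ (i,j) = (\<Sum>l\<in>{r..<r+s}. 1 / (1 - (Sig $$ (l,l))\<^sup>2) * (Zt $$ (i,l) * Zt $$ (j,l)))"
        using Zt_c i j rp by (subst sum_mats_index, auto intro: outer_col_carrier outer_col_carrier2 intro!: sum.cong simp: outer_def dZ dW)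
      have e2: "?S2 $$ (i,j) = (\<Sum>l\<in>{r..<r+s}. Sig $$ (l,l) / (1 - (Sig $$ (l,l))\<^sup>2) * (Zt $$ (i,l) * Wt $$ (j,l)))"
        using Zt_c Wt_c i j rp by (subst sum_mats_index, auto intro: outer_col_carrier outer_col_carrier2 intro!: sum.cong simp: outer_def dZ dW)
      have e3: "?S3 $$ (i,j) = (\<Sum>l\<in>{r+s..<p}. Zt $$ (i,l) * Zt $$ (j,l))"
        using Zt_c i j rp by (subst sum_mats_index, auto intro: outer_col_carrier outer_col_carrier2 intro!: sum.cong simp: outer_def dZ dW)
      have f1: "(A * dmat q q d1 * transpose_mat A) $$ (i,j) = (\<Sum>l\<in>{r..<r+s}. 1 / (1 - (Sig $$ (l,l))\<^sup>2) * (Zt $$ (i,l) * Zt $$ (j,l))) + (\<Sum>l\<in>{r+s..<p}. Zt $$ (i,l) * Zt $$ (j,l))"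
        using L1[OF Zt_c Zt_c rp(1) i j, of "\<lambda>l. 1 / (1 - (Sig $$ (l,l))\<^sup>2)"] unfolding A_def q_def d1_def by simp
      have f2: "(A * dmat q k nd2 * transpose_mat B) $$ (i,j) = - (\<Sum>l\<in>{r..<r+s}. Sig $$ (l,l) / (1 - (Sig $$ (l,l))\<^sup>2) * (Zt $$ (i,l) * Wt $$ (j,l)))"
        using L2[OF Zt_c Wt_c rp i j, of "\<lambda>l. Sig $$ (l,l) / (1 - (Sig $$ (l,l))\<^sup>2)"] unfolding A_def B_def q_def k_def nd2_def by simp
      have "PC $$ (i,j) = (A * dmat q q d1 * transpose_mat A) $$ (i,j) + (A * dmat q k nd2 * transpose_mat B) $$ (i,j)"
        unfolding PC_eq using A_c B_c i j by simp
      also have "\<dots> = (?S1 - ?S2 + ?S3) $$ (i,j)" using c1 c2 c3 i j e1 e2 e3 f1 f2 by simp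
      finally show "PC $$ (i,j) = (?S1 - ?S2 + ?S3) $$ (i,j)" .
    qed (insert c1 c2 c3 PC_c, auto)
  qed
  have part_ii_N: "PN = sum_mats n n (\<lambda>i. (1 / (1 - (Sig $$ (i,i))\<^sup>2)) \<cdot>\<^sub>m outer (col Wt i) (col Wt i)) r (r + s)
          - sum_mats n n (\<lambda>i. (Sig $$ (i,i) / (1 - (Sig $$ (i,i))\<^sup>2)) \<cdot>\<^sub>m outer (col Wt i) (col Zt i)) r (r + s)
          + sum_mats n n (\<lambda>i. outer (col Wt i) (col Wt i)) (r + s) K"
    (is "_ = ?S1 - ?S2 + ?S3")
  proof -
    have c1: "?S1 \<in> carrier_mat n n" using Wt_c by (intro sum_mats_carrier, auto intro: outer_col_carrier outer_col_carrier2)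
    have c2: "?S2 \<in> carrier_mat n n" using Zt_c Wt_c by (intro sum_mats_carrier, auto intro: outer_col_carrier outer_col_carrier2)
    have c3: "?S3 \<in> carrier_mat n n" using Wt_c by (intro sum_mats_carrier, auto intro: outer_col_carrier outer_col_carrier2)
    show ?thesis
    proof (rule eq_matI)
      fix i j assume "i < dim_row (?S1 - ?S2 + ?S3)" "j < dim_col (?S1 - ?S2 + ?S3)"
      hence i: "i < n" and j: "j < n" using c1 c2 c3 by auto
      have e1: "?S1 $$ (i,j) = (\<Sum>l\<in>{r..<r+s}. 1 / (1 - (Sig $$ (l,l))\<^sup>2) * (Wt $$ (i,l) * Wt $$ (j,l)))"
        using Wt_c i j rp by (subst sum_mats_index, auto intro: outer_col_carrier outer_col_carrier2 intro!: sum.cong simp: outer_def dZ dW)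
      have e2: "?S2 $$ (i,j) = (\<Sum>l\<in>{r..<r+s}. Sig $$ (l,l) / (1 - (Sig $$ (l,l))\<^sup>2) * (Wt $$ (i,l) * Zt $$ (j,l)))"
        using Zt_c Wt_c i j rp by (subst sum_mats_index, auto intro: outer_col_carrier outer_col_carrier2 intro!: sum.cong simp: outer_def dZ dW)
      have e3: "?S3 $$ (i,j) = (\<Sum>l\<in>{r+s..<K}. Wt $$ (i,l) * Wt $$ (j,l))"
        using Wt_c i j rp by (subst sum_mats_index, auto intro: outer_col_carrier outer_col_carrier2 intro!: sum.cong simp: outer_def dZ dW)
      have f1: "(B * dmat k k d1 * transpose_mat B) $$ (i,j) = (\<Sum>l\<in>{r..<r+s}. 1 / (1 - (Sig $$ (l,l))\<^sup>2) * (Wt $$ (i,l) * Wt $$ (j,l))) + (\<Sum>l\<in>{r+s..<K}. Wt $$ (i,l) * Wt $$ (j,l))"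
        using L1[OF Wt_c Wt_c rp(2) i j, of "\<lambda>l. 1 / (1 - (Sig $$ (l,l))\<^sup>2)"] unfolding B_def k_def d1_def by simp
      have f2: "(B * dmat k q nd2 * transpose_mat A) $$ (i,j) = - (\<Sum>l\<in>{r..<r+s}. Sig $$ (l,l) / (1 - (Sig $$ (l,l))\<^sup>2) * (Wt $$ (i,l) * Zt $$ (j,l)))"
        using L2[OF Wt_c Zt_c rp(2) rp(1) i j, of "\<lambda>l. Sig $$ (l,l) / (1 - (Sig $$ (l,l))\<^sup>2)"] unfolding A_def B_def q_def k_def nd2_def by simp
      have "PN $$ (i,j) = (B * dmat k q nd2 * transpose_mat A) $$ (i,j) + (B * dmat k k d1 * transpose_mat B) $$ (i,j)"
        unfolding PN_eq using A_c B_c i j by simp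
      also have "\<dots> = (?S1 - ?S2 + ?S3) $$ (i,j)" using c1 c2 c3 i j e1 e2 e3 f1 f2 by simp
      finally show "PN $$ (i,j) = (?S1 - ?S2 + ?S3) $$ (i,j)" .
    qed (insert c1 c2 c3 PN_c, auto)
  qed
  show ?thesis using part_i part_ii_C part_ii_N part_iii part_iv by blast
qed

end
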